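(* Let $S$ be a finite set, let $\mathcal{I}\subseteq 2^S$ be a downset of $(2^S,\subseteq)$, and let $T$ be a witnessing tree showing $\mathcal{I}\in\bullet(\{2^X\mid X\subseteq S\})$. Then $\mathrm{mult}_T(2^X)=\hat\mu_{\mathcal{I}}(X)$ for every $X\subseteq S$.
   Context: Here $2^X=\{Y\subseteq S\mid Y\subseteq X\}$ is the principal downset generated by $X$. For $\mathcal{C}\subseteq 2^S$, the generalized Möbius function $\hat\mu_{\mathcal{C}}:2^S\to\mathbb{Z}$ is defined by top-down induction: $\hat\mu_{\mathcal{C}}(X)=[X\in\mathcal{C}]-\sum_{X\subsetneq X'\subseteq S}\hat\mu_{\mathcal{C}}(X')$ (indicator $[X\in\mathcal{C}]\in\{0,1\}$). For sets $A,B$, $A\,\dot\cup\,B=A\cup B$ is defined only when $A\cap B=\emptyset$, and $A\,\dot\setminus\,B=A\setminus B$ is defined only when $B\subseteq A$. For a finite family $\mathcal{G}$ of sets, $\bullet(\mathcal{G})$ is the smallest family containing $\emptyset$ and every member of $\mathcal{G}$ and closed under well-defined disjoint unions and subset complements. A witnessing tree of $X\in\bullet(\mathcal{G})$ is a rooted ordered tree whose leaves are labelled by $\emptyset$ or members of $\mathcal{G}$ and whose internal nodes are labelled $\dot\cup$ or $\dot\setminus$ ($\dot\setminus$-nodes binary), such that evaluating internal nodes as the corresponding operations on their children's values is always well defined and the root evaluates to $X$. The polarity of a leaf $\ell$ is $1$ if the root-to-$\ell$ path goes to the right child of a $\dot\setminus$-node an even number of times and $-1$ otherwise; $\mathrm{mult}_T(U)$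 is the sum of the polarities of the leaves of $T$ labelled $U$ (so it is $0$ if no leaf is labelled $U$). *)

theory Defs
  imports Main
begin

function mu_hat :: "'a set \<Rightarrow> 'a set set \<Rightarrow> 'a set \<Rightarrow> int" where
  "mu_hat S C X =
     (if finite S \<and> X \<subseteq> S then
        (if X \<in> C then 1 else 0) - (\<Sum>X'\<in>{X'. X \<subset> X' \<and> X' \<subseteq> S}. mu_hat S C X')
      else 0)"
  by auto
termination
proof (relation "measure (\<lambda>(S, C, X). card (S - X))")
  show "wf (measure (\<lambda>(S, C, X). card (S - X)))" by simp
next
  fix S :: "'a set" and C X X'
  assume "finite S \<and> X \<subseteq> S" and "X' \<in> {X'. X \<subset> X' \<and> X' \<subseteq> S}"
  then have "S - X' \<subset> S - X" "finite (S - X)" by auto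
  then show "((S, C, X'), (S, C, X)) \<in> measure (\<lambda>(S, C, X). card (S - X))"
    by (simp add: psubset_card_mono)
qed

text \<open>Rooted ordered trees: leaves carry a label (a set), DUnion nodes are
  disjoint-union nodes with an ordered list of children, DMinus nodes are binary
  subset-complement nodes (left child minus right child).\<close>

datatype 'b wtree = Leaf 'b | DUnion "'b wtree list" | DMinus "'b wtree" "'b wtree"

fun wt_eval :: "'c set wtree \<Rightarrow> 'c set option" where
  "wt_eval (Leaf V) = Some V"
| "wt_eval (DUnion ts) =
     (let vs = map wt_eval ts in
      if ts \<noteq> [] \<and> (\<forall>v\<in>set vs. v \<noteq> None)
         \<and> (\<forall>i<length vs. \<forall>j<length vs. i \<noteq> j \<longrightarrow> the (vs ! i) \<inter> the (vs ! j) = {})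
      then Some (\<Union> (set (map the vs))) else None)"
| "wt_eval (DMinus a b) =
     (case (wt_eval a, wt_eval b) of
        (Some A, Some B) \<Rightarrow> if B \<subseteq> A then Some (A - B) else None
      | _ \<Rightarrow> None)"

fun wt_leaves :: "'b wtree \<Rightarrow> ('b \<times> int) list" where
  "wt_leaves (Leaf V) = [(V, 1)]"
| "wt_leaves (DUnion ts) = concat (map wt_leaves ts)"
| "wt_leaves (DMinus a b) = wt_leaves a @ map (\<lambda>(V, p). (V, - p)) (wt_leaves b)"

definition wt_mult :: "'b wtree \<Rightarrow> 'b \<Rightarrow> int" where
  "wt_mult T U = sum_list (map snd (filter (\<lambda>(V, p). V = U) (wt_leaves T)))"

definition witnessing_tree :: "'c set set \<Rightarrow> 'c set wtree \<Rightarrow> 'c set \<Rightarrow> bool" where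
  "witnessing_tree G T X \<longleftrightarrow>
     (\<forall>(V, p)\<in>set (wt_leaves T). V = {} \<or> V \<in> G) \<and> wt_eval T = Some X"

definition downset :: "'a set \<Rightarrow> 'a set set \<Rightarrow> bool" where
  "downset S I \<longleftrightarrow> I \<subseteq> Pow S \<and> (\<forall>A\<in>I. \<forall>B. B \<subseteq> A \<longrightarrow> B \<in> I)"

end

theory Submission
  imports Defs
begin

definition ind :: "'x \<Rightarrow> 'x set \<Rightarrow> int" where
  "ind y V = (if y \<in> V then 1 else 0)"

lemma sum_list_ind_disj:
  "(\<forall>i<length vs. \<forall>j<length vs. i\<noteq>j \<longrightarrow> vs!i \<inter> vs!j = {}) \<Longrightarrow>
   sum_list (map (ind y) vs) = ind y (\<Union>(set vs))"
proof (induction vs)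
  case Nil
  then show ?case by (simp add: ind_def)
next
  case (Cons a vs)
  have t: "\<forall>i<length vs. \<forall>j<length vs. i\<noteq>j \<longrightarrow> vs!i \<inter> vs!j = {}"
  proof (intro allI impI)
    fix i j assume "i < length vs" "j < length vs" "i \<noteq> j"
    then have "(a#vs)!(Suc i) \<inter> (a#vs)!(Suc j) = {}"
      by (intro Cons.prems[rule_format]) auto
    then show "vs!i \<inter> vs!j = {}" by (simp only: nth_Cons_Suc)
  qed
  have d: "a \<inter> v = {}" if "v \<in> set vs" for v
  proof -
    have "\<exists>j<length vs. vs!j = v" using that by (simp only: in_set_conv_nth)
    then obtain j where "j < length vs" "v = vs!j" by blast
    then have "(a#vs)!0 \<inter> (a#vs)!(Suc j) = {}"
      by (intro Cons.prems[rule_format]) auto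
    then show ?thesis using \<open>v = vs!j\<close> by (simp only: nth_Cons_0 nth_Cons_Suc)
  qed
  have e: "y \<in> a \<Longrightarrow> y \<notin> \<Union>(set vs)" using d by blast
  have "sum_list (map (ind y) (a#vs)) = ind y a + ind y (\<Union>(set vs))"
    using Cons.IH[OF t] by simp
  also have "\<dots> = ind y (\<Union>(set (a#vs)))"
    using e unfolding ind_def by (cases "y \<in> a") auto
  finally show ?case .
qed

lemma sl_concat: "sum_list (map f (concat xss)) = sum_list (map (\<lambda>xs. sum_list (map f xs)) xss)"
  for f :: "'x \<Rightarrow> int"
  by (induction xss) auto

lemma sl_neg: "sum_list (map (\<lambda>(L,p). p * g L) (map (\<lambda>(V,p). (V,-p)) xs)) = - sum_list (map (\<lambda>(L,p). p * g L) xs)"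
  for g :: "'x \<Rightarrow> int"
  by (induction xs) auto

lemma ind_leaves:
  "wt_eval T = Some V \<Longrightarrow>
   ind y V = sum_list (map (\<lambda>(L,p). p * ind y L) (wt_leaves T))"
proof (induction T arbitrary: V)
  case (Leaf x)
  then show ?case by simp
next
  case (DUnion ts)
  let ?vs = "map wt_eval ts"
  have c: "ts \<noteq> [] \<and> (\<forall>v\<in>set ?vs. v \<noteq> None)
         \<and> (\<forall>i<length ?vs. \<forall>j<length ?vs. i \<noteq> j \<longrightarrow> the (?vs ! i) \<inter> the (?vs ! j) = {})"
    and V: "V = \<Union> (set (map the ?vs))"
    using DUnion.prems by (auto simp: Let_def split: if_splits)
  have "sum_list (map (\<lambda>(L,p). p * ind y L) (wt_leaves (DUnion ts)))
      = sum_list (map (\<lambda>t. sum_list (map (\<lambda>(L,p). p * ind y L) (wt_leaves t))) ts)"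
    by (simp add: sl_concat comp_def)
  also have "\<dots> = sum_list (map (\<lambda>t. ind y (the (wt_eval t))) ts)"
  proof (rule arg_cong[where f=sum_list], rule map_cong[OF refl])
    fix t assume "t \<in> set ts"
    moreover then obtain W where "wt_eval t = Some W" using c by force
    ultimately show "sum_list (map (\<lambda>(L,p). p * ind y L) (wt_leaves t)) = ind y (the (wt_eval t))"
      using DUnion.IH by simp
  qed
  also have "\<dots> = sum_list (map (ind y) (map the ?vs))" by (simp add: comp_def)
  also have "\<dots> = ind y V" unfolding V
    by (rule sum_list_ind_disj) (use c in auto)
  finally show ?case by simp
next
  case (DMinus a b)
  then obtain A B where A: "wt_eval a = Some A" and B: "wt_eval b = Some B"
    and s: "B \<subseteq> A" and V: "V = A - B"
    by (auto split: option.splits if_splits)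
  have "ind y V = ind y A - ind y B" using s V by (auto simp: ind_def)
  moreover have "sum_list (map (\<lambda>(L,p). p * ind y L) (wt_leaves (DMinus a b)))
     = sum_list (map (\<lambda>(L,p). p * ind y L) (wt_leaves a)) + - sum_list (map (\<lambda>(L,p). p * ind y L) (wt_leaves b))"
    by (simp only: wt_leaves.simps map_append sum_list_append sl_neg)
  ultimately show ?case using DMinus.IH(1)[OF A] DMinus.IH(2)[OF B]
    by simp
qed

lemma regroup:
  fixes f :: "'x \<Rightarrow> int" and xs :: "('x \<times> int) list"
  assumes "finite A" "\<forall>(L,p)\<in>set xs. L \<in> A"
  shows "sum_list (map (\<lambda>(L,p). p * f L) xs)
     = (\<Sum>L\<in>A. f L * sum_list (map snd (filter (\<lambda>(V,p). V = L) xs)))"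
  using assms(2)
proof (induction xs)
  case Nil
  then show ?case by simp
next
  case (Cons x xs)
  obtain L0 p0 where x: "x = (L0,p0)" by fastforce
  have L0: "L0 \<in> A" using Cons.prems x by auto
  have "(\<Sum>L\<in>A. f L * sum_list (map snd (filter (\<lambda>(V,p). V = L) (x#xs))))
     = (\<Sum>L\<in>A. (if L = L0 then f L0 * p0 else 0) + f L * sum_list (map snd (filter (\<lambda>(V,p). V = L) xs)))"
    by (rule sum.cong) (auto simp: x algebra_simps)
  also have "\<dots> = f L0 * p0 + (\<Sum>L\<in>A. f L * sum_list (map snd (filter (\<lambda>(V,p). V = L) xs)))"
    using assms(1) L0 by (simp add: sum.distrib)
  finally show ?case using Cons x by (simp add: algebra_simps)
qed

theorem proposition5p8:
  fixes S :: "'a set" and I :: "'a set set" and T :: "'a set set wtree"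
  assumes "finite S"
    and "downset S I"
    and "witnessing_tree {Pow X | X. X \<subseteq> S} T I"
  shows "\<forall>X. X \<subseteq> S \<longrightarrow> wt_mult T (Pow X) = mu_hat S I X"
proof -
  define m where "m X = wt_mult T (Pow X)" for X
  have ev: "wt_eval T = Some I" and lv: "\<forall>(V, p)\<in>set (wt_leaves T). V = {} \<or> V \<in> {Pow X | X. X \<subseteq> S}"
    using assms(3) unfolding witnessing_tree_def by auto
  have key: "ind Y I = (\<Sum>X\<in>Pow S. m X * ind Y (Pow X))" for Y
  proof -
    have fA: "finite (insert {} (Pow ` Pow S))" using assms(1) by simp
    have lA: "\<forall>(L,p)\<in>set (wt_leaves T). L \<in> insert {} (Pow ` Pow S)" using lv by auto
    have "ind Y I = sum_list (map (\<lambda>(L,p). p * ind Y L) (wt_leaves T))"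
      by (rule ind_leaves[OF ev])
    also have "\<dots> = (\<Sum>L\<in>insert {} (Pow ` Pow S). ind Y L * wt_mult T L)"
      unfolding wt_mult_def by (rule regroup[OF fA lA])
    also have "\<dots> = (\<Sum>L\<in>Pow ` Pow S. ind Y L * wt_mult T L)"
      using assms(1) by (subst sum.insert) (auto simp: ind_def)
    also have "\<dots> = (\<Sum>X\<in>Pow S. ind Y (Pow X) * wt_mult T (Pow X))"
      by (subst sum.reindex) (auto simp: inj_on_def)
    finally show ?thesis by (simp add: m_def mult.commute)
  qed
  have rec: "m Y = ind Y I - (\<Sum>X\<in>{X. Y \<subset> X \<and> X \<subseteq> S}. m X)" if "Y \<subseteq> S" for Y
  proof -
    have "(\<Sum>X\<in>Pow S. m X * ind Y (Pow X)) = (\<Sum>X\<in>{X. Y \<subseteq> X \<and> X \<subseteq> S}. m X)"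
    proof -
      have "(\<Sum>X\<in>Pow S. m X * ind Y (Pow X)) = (\<Sum>X\<in>Pow S. if Y \<subseteq> X then m X else 0)"
        by (rule sum.cong) (auto simp: ind_def)
      also have "\<dots> = (\<Sum>X\<in>{X\<in>Pow S. Y \<subseteq> X}. m X)"
        using assms(1) by (intro sum.inter_filter[symmetric]) simp
      also have "{X\<in>Pow S. Y \<subseteq> X} = {X. Y \<subseteq> X \<and> X \<subseteq> S}" by auto
      finally show ?thesis .
    qed
    also have "{X. Y \<subseteq> X \<and> X \<subseteq> S} = insert Y {X. Y \<subset> X \<and> X \<subseteq> S}" using that by auto
    also have "(\<Sum>X\<in>insert Y {X. Y \<subset> X \<and> X \<subseteq> S}. m X) = m Y + (\<Sum>X\<in>{X. Y \<subset> X \<and> X \<subseteq> S}. m X)"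
      using assms(1) by (subst sum.insert) (auto intro: finite_subset[of _ "Pow S"])
    finally show ?thesis using key[of Y] by simp
  qed
  have main: "\<forall>Y. card (S - Y) = n \<longrightarrow> Y \<subseteq> S \<longrightarrow> m Y = mu_hat S I Y" for n
  proof (induction n rule: less_induct)
    case (less n)
    show ?case
    proof (intro allI impI)
      fix Y assume n: "card (S - Y) = n" and Y: "Y \<subseteq> S"
      have "(\<Sum>X\<in>{X. Y \<subset> X \<and> X \<subseteq> S}. m X) = (\<Sum>X\<in>{X. Y \<subset> X \<and> X \<subseteq> S}. mu_hat S I X)"
      proof (rule sum.cong[OF refl])
        fix X assume X: "X \<in> {X. Y \<subset> X \<and> X \<subseteq> S}"
        then have "S - X \<subset> S - Y" by auto
        then have "card (S - X) < n" using n assms(1) by (metis finite_Diff psubset_card_mono)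
        then show "m X = mu_hat S I X" using less.IH[of "card (S - X)"] X by simp
      qed
      then show "m Y = mu_hat S I Y"
        using rec[OF Y] assms(1) Y by (subst mu_hat.simps) (simp add: ind_def del: mu_hat.simps)
    qed
  qed
  show ?thesis
  proof (intro allI impI)
    fix X assume "X \<subseteq> S"
    then have "m X = mu_hat S I X" using main[of "card (S - X)"] by simp
    then show "wt_mult T (Pow X) = mu_hat S I X" by (simp only: m_def)
  qed
qed

end
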